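(* Let $X$ be a real Banach space, $k\in\mathbb N$, and $Y$ a closed subspace of $X$. Consider: (a) $Y$ has property-$(k-U)$ in $X$; (b) $Y^\perp$ is a $k$-Chebyshev subspace of $X^*$; (c) $\dim\big(\{S(X^*,x)-x^*\}\cap Y^\perp\big)<k$ for all $x\in S_Y$ and all $x^*\in S(X^*,x)$. Then (a) $\Leftrightarrow$ (b) and (b) $\Rightarrow$ (c). If $Y$ is reflexive, then (c) $\Rightarrow$ (b).
   Context: For $x\in X\setminus\{0\}$, $S(X^*,x)=\{x^*\in S_{X^*}:x^*(x)=\|x\|\}$. $Y^\perp=\{x^*\in X^*:x^*|_Y=0\}$. For a set $A$ and $a\in A$, $\dim A=\dim\operatorname{span}(A-a)$. For $y^*\in Y^*$, $HB(y^* )=\{x^*\in X^*:x^*|_Y=y^*,\ \|x^*\|=\|y^*\|\}$. $Y$ has property-$(k-U)$ in $X$ if $\dim HB(y^* )\le k-1$ for all $y^*\in S_{Y^*}$. A subspace $V$ of a Banach space $E$ is $k$-Chebyshev if it is proximinal (every $e\in E$ has a nonempty set $P_V(e)$ of nearest points in $V$) and $\dim P_V(e)\le k-1$ for all $e\in E$. *)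

theory Defs
  imports "HOL-Analysis.Analysis"
begin

text \<open>Dimension of a set A: dim span(A - a) for a in A (independent of the choice of a),
  as an extended natural number (infinite dimension = \<infinity>).\<close>
definition set_dim :: "'a::real_vector set \<Rightarrow> enat" where
  "set_dim A = (let a = (SOME a. a \<in> A); V = (\<lambda>x. x - a) ` A in
     Sup {enat (card B) | B. finite B \<and> independent B \<and> B \<subseteq> span V})"

definition dual_sphere :: "'a::real_normed_vector \<Rightarrow> ('a \<Rightarrow>\<^sub>L real) set" where
  "dual_sphere x = {f. norm f = 1 \<and> blinfun_apply f x = norm x}"

definition annihilator :: "'a::real_normed_vector set \<Rightarrow> ('a \<Rightarrow>\<^sub>L real) set" where
  "annihilator Y = {f. \<forall>y\<in>Y. blinfun_apply f y = 0}"

text \<open>The dual Y^* of a subspace Y: bounded linear functionals on Y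
  (represented as functions vanishing outside Y), with the dual norm.\<close>
definition dual_on :: "'a::real_normed_vector set \<Rightarrow> ('a \<Rightarrow> real) set" where
  "dual_on Y = {g. (\<forall>x\<in>Y. \<forall>y\<in>Y. g (x + y) = g x + g y)
                 \<and> (\<forall>c. \<forall>x\<in>Y. g (c *\<^sub>R x) = c * g x)
                 \<and> (\<exists>B. \<forall>x\<in>Y. \<bar>g x\<bar> \<le> B * norm x)
                 \<and> (\<forall>x. x \<notin> Y \<longrightarrow> g x = 0)}"

definition dual_norm_on :: "'a::real_normed_vector set \<Rightarrow> ('a \<Rightarrow> real) \<Rightarrow> real" where
  "dual_norm_on Y g = Sup {\<bar>g y\<bar> | y. y \<in> Y \<and> norm y \<le> 1}"

definition HB :: "'a::real_normed_vector set \<Rightarrow> ('a \<Rightarrow> real) \<Rightarrow> ('a \<Rightarrow>\<^sub>L real) set" where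
  "HB Y g = {f. (\<forall>y\<in>Y. blinfun_apply f y = g y) \<and> norm f = dual_norm_on Y g}"

definition property_kU :: "'a::real_normed_vector set \<Rightarrow> nat \<Rightarrow> bool" where
  "property_kU Y k \<longleftrightarrow>
     (\<forall>g\<in>dual_on Y. dual_norm_on Y g = 1 \<longrightarrow> set_dim (HB Y g) \<le> enat (k - 1))"

definition metric_proj :: "'b::real_normed_vector set \<Rightarrow> 'b \<Rightarrow> 'b set" where
  "metric_proj V e = {v\<in>V. \<forall>w\<in>V. norm (e - v) \<le> norm (e - w)}"

definition proximinal :: "'b::real_normed_vector set \<Rightarrow> bool" where
  "proximinal V \<longleftrightarrow> (\<forall>e. metric_proj V e \<noteq> {})"

definition k_chebyshev :: "'b::real_normed_vector set \<Rightarrow> nat \<Rightarrow> bool" where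
  "k_chebyshev V k \<longleftrightarrow> subspace V \<and> proximinal V \<and>
     (\<forall>e. set_dim (metric_proj V e) \<le> enat (k - 1))"

text \<open>Reflexivity of the subspace Y: the canonical map Y \<rightarrow> Y^** is onto.\<close>
definition reflexive_on :: "'a::real_normed_vector set \<Rightarrow> bool" where
  "reflexive_on Y \<longleftrightarrow>
     (\<forall>\<Phi> :: ('a \<Rightarrow> real) \<Rightarrow> real.
        (\<forall>g\<in>dual_on Y. \<forall>h\<in>dual_on Y. \<Phi> (\<lambda>x. g x + h x) = \<Phi> g + \<Phi> h)
        \<and> (\<forall>c. \<forall>g\<in>dual_on Y. \<Phi> (\<lambda>x. c * g x) = c * \<Phi> g)
        \<and> (\<exists>B. \<forall>g\<in>dual_on Y. \<bar>\<Phi> g\<bar> \<le> B * dual_norm_on Y g)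
        \<longrightarrow> (\<exists>y\<in>Y. \<forall>g\<in>dual_on Y. \<Phi> g = g y))"

end

theory Submission
  imports Defs
begin

definition good_graph :: "'b::real_vector set \<Rightarrow> 'b set \<Rightarrow> ('b \<Rightarrow> real) \<Rightarrow> ('b \<Rightarrow> real) \<Rightarrow> ('b \<times> real) set \<Rightarrow> bool" where
  "good_graph E F p f G \<longleftrightarrow>
     (\<forall>x a b. (x,a) \<in> G \<longrightarrow> (x,b) \<in> G \<longrightarrow> a = b)
   \<and> (\<forall>x a y b. (x,a) \<in> G \<longrightarrow> (y,b) \<in> G \<longrightarrow> (x+y, a+b) \<in> G)
   \<and> (\<forall>x a c. (x,a) \<in> G \<longrightarrow> (c *\<^sub>R x, c*a) \<in> G)
   \<and> (\<forall>x\<in>F. (x, f x) \<in> G)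
   \<and> (\<forall>x a. (x,a) \<in> G \<longrightarrow> x \<in> E \<and> a \<le> p x)"

lemma gg1: "good_graph E F p f G \<Longrightarrow> (x,a) \<in> G \<Longrightarrow> (x,b) \<in> G \<Longrightarrow> a = b"
  unfolding good_graph_def by blast
lemma gg2: "good_graph E F p f G \<Longrightarrow> (x,a) \<in> G \<Longrightarrow> (y,b) \<in> G \<Longrightarrow> (x+y, a+b) \<in> G"
  unfolding good_graph_def by blast
lemma gg3: "good_graph E F p f G \<Longrightarrow> (x,a) \<in> G \<Longrightarrow> (c *\<^sub>R x, c*a) \<in> G"
  unfolding good_graph_def by blast
lemma gg4: "good_graph E F p f G \<Longrightarrow> x \<in> F \<Longrightarrow> (x, f x) \<in> G"
  unfolding good_graph_def by blast
lemma gg5: "good_graph E F p f G \<Longrightarrow> (x,a) \<in> G \<Longrightarrow> x \<in> E"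
  unfolding good_graph_def by blast
lemma gg6: "good_graph E F p f G \<Longrightarrow> (x,a) \<in> G \<Longrightarrow> a \<le> p x"
  unfolding good_graph_def by blast
lemma ggI:
  assumes "\<And>x a b. (x,a) \<in> G \<Longrightarrow> (x,b) \<in> G \<Longrightarrow> a = b"
   "\<And>x a y b. (x,a) \<in> G \<Longrightarrow> (y,b) \<in> G \<Longrightarrow> (x+y, a+b) \<in> G"
   "\<And>x a c. (x,a) \<in> G \<Longrightarrow> (c *\<^sub>R x, c*a) \<in> G"
   "\<And>x. x \<in> F \<Longrightarrow> (x, f x) \<in> G"
   "\<And>x a. (x,a) \<in> G \<Longrightarrow> x \<in> E"
   "\<And>x a. (x,a) \<in> G \<Longrightarrow> a \<le> p x"
  shows "good_graph E F p f G"
  unfolding good_graph_def using assms by blast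

lemma hahn_banach_gen:
  fixes p f :: "'b::real_vector \<Rightarrow> real"
  assumes E: "subspace E" and F: "subspace F" and FE: "F \<subseteq> E"
    and p_add: "\<And>x y. x \<in> E \<Longrightarrow> y \<in> E \<Longrightarrow> p (x + y) \<le> p x + p y"
    and p_scale: "\<And>x c. x \<in> E \<Longrightarrow> c \<ge> 0 \<Longrightarrow> p (c *\<^sub>R x) = c * p x"
    and f_add: "\<And>x y. x \<in> F \<Longrightarrow> y \<in> F \<Longrightarrow> f (x + y) = f x + f y"
    and f_scale: "\<And>x c. x \<in> F \<Longrightarrow> f (c *\<^sub>R x) = c * f x"
    and f_le: "\<And>x. x \<in> F \<Longrightarrow> f x \<le> p x"
  shows "\<exists>h. (\<forall>x\<in>F. h x = f x) \<and> (\<forall>x\<in>E. \<forall>y\<in>E. h (x + y) = h x + h y)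
           \<and> (\<forall>x\<in>E. \<forall>c. h (c *\<^sub>R x) = c * h x) \<and> (\<forall>x\<in>E. h x \<le> p x)"
proof -
  define A where "A = {G. good_graph E F p f G}"
  have G0: "(\<lambda>x. (x, f x)) ` F \<in> A"
    unfolding A_def good_graph_def using F FE f_le
    by (auto simp: f_add f_scale subspace_add subspace_scale image_iff)
  have "\<exists>M\<in>A. \<forall>X\<in>A. M \<subseteq> X \<longrightarrow> X = M"
  proof (rule Zorn_Lemma2, intro ballI)
    fix C assume C: "C \<in> chains A"
    show "\<exists>U\<in>A. \<forall>X\<in>C. X \<subseteq> U"
    proof (cases "C = {}")
      case True then show ?thesis using G0 by auto
    next
      case False
      have CA: "C \<subseteq> A" and ch: "\<And>X Y. X \<in> C \<Longrightarrow> Y \<in> C \<Longrightarrow> X \<subseteq> Y \<or> Y \<subseteq> X"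
        using C unfolding chains_def chain_subset_def by auto
      have gC: "\<And>X. X \<in> C \<Longrightarrow> good_graph E F p f X" using CA A_def by auto
      have "good_graph E F p f (\<Union>C)"
      proof (rule ggI)
        fix x a b assume "(x,a) \<in> \<Union>C" "(x,b) \<in> \<Union>C"
        then obtain X Y where XY: "X \<in> C" "Y \<in> C" "(x,a) \<in> X" "(x,b) \<in> Y" by auto
        show "a = b"
        proof (cases "X \<subseteq> Y")
          case True then show ?thesis using XY gC[of Y] gg1 by (metis subsetD)
        next
          case False then have "Y \<subseteq> X" using ch XY by blast
          then show ?thesis using XY gC[of X] gg1 by (metis subsetD)
        qed
      next
        fix x a y b assume "(x,a) \<in> \<Union>C" "(y,b) \<in> \<Union>C"
        then obtain X Y where XY: "X \<in> C" "Y \<in> C" "(x,a) \<in> X" "(y,b) \<in> Y" by auto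
        show "(x+y, a+b) \<in> \<Union>C"
        proof (cases "X \<subseteq> Y")
          case True then show ?thesis using XY gC[of Y] gg2 by (metis UnionI subsetD)
        next
          case False then have "Y \<subseteq> X" using ch XY by blast
          then show ?thesis using XY gC[of X] gg2 by (metis UnionI subsetD)
        qed
      next
        fix x a c assume "(x,a) \<in> \<Union>C"
        then obtain X where "X \<in> C" "(x,a) \<in> X" by auto
        then show "(c *\<^sub>R x, c*a) \<in> \<Union>C" using gC[of X] gg3 by (metis UnionI)
      next
        fix x assume "x \<in> F"
        obtain X where "X \<in> C" using False by auto
        then show "(x, f x) \<in> \<Union>C" using gC[of X] \<open>x \<in> F\<close> gg4 by (metis UnionI)
      next
        fix x a assume "(x,a) \<in> \<Union>C"
        then obtain X where "X \<in> C" "(x,a) \<in> X" by auto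
        then show "x \<in> E" using gC[of X] gg5 by metis
      next
        fix x a assume "(x,a) \<in> \<Union>C"
        then obtain X where "X \<in> C" "(x,a) \<in> X" by auto
        then show "a \<le> p x" using gC[of X] gg6 by metis
      qed
      then show ?thesis unfolding A_def by auto
    qed
  qed
  then obtain M where MA: "M \<in> A" and Mmax: "\<And>X. X \<in> A \<Longrightarrow> M \<subseteq> X \<Longrightarrow> X = M" by blast
  have gM: "good_graph E F p f M" using MA A_def by auto
  define D where "D = fst ` M"
  define h where "h x = (SOME a. (x,a) \<in> M)" for x
  note gM1 = gg1[OF gM] and gM2 = gg2[OF gM] and gM3 = gg3[OF gM] and gM4 = gg4[OF gM]
  have gM5: "x \<in> E \<and> a \<le> p x" if "(x,a) \<in> M" for x a
    using gg5[OF gM that] gg6[OF gM that] by blast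
  have inD: "x \<in> D" if "(x,a) \<in> M" for x a
    unfolding D_def using that by (rule image_eqI[rotated]) simp
  have hM: "(x, h x) \<in> M" if "x \<in> D" for x
  proof -
    from that obtain a where "(x,a) \<in> M" unfolding D_def by auto
    then show ?thesis unfolding h_def by (rule someI)
  qed
  have Mh: "a = h x" if "(x,a) \<in> M" for x a
    using gM1[OF that hM[OF inD[OF that]]] .
  have DE: "D \<subseteq> E" using gM5 hM by blast
  have FD: "F \<subseteq> D" using gM4 inD by blast
  have D_add: "x + y \<in> D" and h_add: "h (x + y) = h x + h y" if "x \<in> D" "y \<in> D" for x y
  proof -
    have *: "(x+y, h x + h y) \<in> M" using gM2[OF hM[OF that(1)] hM[OF that(2)]] .
    show "x + y \<in> D" using inD[OF *] .
    show "h (x + y) = h x + h y" using Mh[OF *] by simp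
  qed
  have D_scale: "c *\<^sub>R x \<in> D" and h_scale: "h (c *\<^sub>R x) = c * h x" if "x \<in> D" for x c
  proof -
    have *: "(c *\<^sub>R x, c * h x) \<in> M" using gM3[OF hM[OF that]] .
    show "c *\<^sub>R x \<in> D" using inD[OF *] .
    show "h (c *\<^sub>R x) = c * h x" using Mh[OF *] by simp
  qed
  have h_le: "h x \<le> p x" if "x \<in> D" for x
    using gM5 hM[OF that] by blast
  have hF: "h x = f x" if "x \<in> F" for x
    using Mh gM4 that by metis
  have D0: "0 \<in> D" using FD F subspace_0 by blast
  have D_diff: "x - y \<in> D" if "x \<in> D" "y \<in> D" for x y
    using D_add[OF that(1) D_scale[OF that(2), of "-1"]] by simp
  have DeqE: "D = E"
  proof (rule ccontr)
    assume "D \<noteq> E"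
    then obtain x0 where x0E: "x0 \<in> E" and x0D: "x0 \<notin> D" using DE by auto
    have E_add: "a + b \<in> E" if "a \<in> E" "b \<in> E" for a b using E that by (rule subspace_add)
    have E_scale: "c *\<^sub>R a \<in> E" if "a \<in> E" for a c using E that by (rule subspace_scale)
    have E_diff: "a - b \<in> E" if "a \<in> E" "b \<in> E" for a b using E that by (rule subspace_diff)
    have DE': "u \<in> E" if "u \<in> D" for u using DE that by blast
    define S where "S = {h u - p (u - x0) | u. u \<in> D}"
    have key: "h u - p (u - x0) \<le> p (v + x0) - h v" if "u \<in> D" "v \<in> D" for u v
    proof -
      have e1: "u - x0 \<in> E" using E_diff DE' that x0E by blast
      have e2: "v + x0 \<in> E" using E_add DE' that x0E by blast
      have "h u + h v = h (u + v)" using h_add that by simp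
      also have "\<dots> \<le> p (u + v)" using h_le D_add that by blast
      also have "u + v = (u - x0) + (v + x0)" by simp
      also have "p \<dots> \<le> p (u - x0) + p (v + x0)" using p_add[OF e1 e2] .
      finally show ?thesis by simp
    qed
    define xi where "xi = Sup S"
    have Sne: "S \<noteq> {}" using D0 unfolding S_def by blast
    have Sbdd: "bdd_above S" unfolding S_def bdd_above_def using key D0 by blast
    have xi_ge: "h u - p (u - x0) \<le> xi" if "u \<in> D" for u
      unfolding xi_def by (rule cSup_upper[OF _ Sbdd]) (use that S_def in blast)
    have xi_le: "xi \<le> p (v + x0) - h v" if "v \<in> D" for v
      unfolding xi_def by (rule cSup_least[OF Sne]) (use key that S_def in blast)
    define M' where "M' = {(u + t *\<^sub>R x0, h u + t * xi) | u t. u \<in> D}"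
    have uniq: "u = u' \<and> t = t'" if "u \<in> D" "u' \<in> D" "u + t *\<^sub>R x0 = u' + t' *\<^sub>R x0" for u u' t t'
    proof -
      have eq: "(t - t') *\<^sub>R x0 = u' - u" using that(3) by (simp add: algebra_simps)
      show ?thesis
      proof (cases "t = t'")
        case True then show ?thesis using that by simp
      next
        case False
        have "x0 = (1/(t - t')) *\<^sub>R ((t - t') *\<^sub>R x0)" using False by simp
        then have "x0 = (1/(t - t')) *\<^sub>R (u' - u)" using eq by simp
        then have "x0 \<in> D" using D_scale[OF D_diff[OF that(2) that(1)]] by simp
        then show ?thesis using x0D by simp
      qed
    qed
    have bound: "h u + t * xi \<le> p (u + t *\<^sub>R x0)" if "u \<in> D" for u t
    proof (cases "t = 0")
      case True then show ?thesis using h_le that by simp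
    next
      case False
      show ?thesis
      proof (cases "t > 0")
        case True
        define v where "v = (1/t) *\<^sub>R u"
        have vD: "v \<in> D" unfolding v_def by (rule D_scale[OF that])
        have ve: "v + x0 \<in> E" using E_add DE' vD x0E by blast
        have tv: "t *\<^sub>R v = u" using True v_def by simp
        have tv2: "t *\<^sub>R (v + x0) = u + t *\<^sub>R x0" using tv by (simp add: scaleR_add_right)
        have "xi \<le> p (v + x0) - h v" using xi_le vD .
        then have "t * xi \<le> t * (p (v + x0) - h v)" using True by simp
        also have "\<dots> = t * p (v + x0) - t * h v" by (simp add: right_diff_distrib)
        also have "t * p (v + x0) = p (t *\<^sub>R (v + x0))" using p_scale[OF ve, of t] True by simp
        also have "t * h v = h (t *\<^sub>R v)" using h_scale[OF vD, of t] by simp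
        finally show ?thesis unfolding tv tv2 by simp
      next
        case False
        then have s: "-t > 0" using \<open>t \<noteq> 0\<close> by simp
        define w where "w = (1/(-t)) *\<^sub>R u"
        have wD: "w \<in> D" unfolding w_def by (rule D_scale[OF that])
        have we: "w - x0 \<in> E" using E_diff DE' wD x0E by blast
        have tw: "(-t) *\<^sub>R w = u" using s w_def by simp
        have tw2: "(-t) *\<^sub>R (w - x0) = u + t *\<^sub>R x0" using tw by (simp add: scaleR_diff_right)
        have "h w - p (w - x0) \<le> xi" using xi_ge wD .
        then have "(-t) * (h w - p (w - x0)) \<le> (-t) * xi" using s by simp
        moreover have "(-t) * (h w - p (w - x0)) = (-t) * h w - (-t) * p (w - x0)"
          by (simp add: right_diff_distrib)
        moreover have "(-t) * p (w - x0) = p ((-t) *\<^sub>R (w - x0))" using p_scale[OF we, of "-t"] s by simp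
        moreover have "(-t) * h w = h ((-t) *\<^sub>R w)" using h_scale[OF wD, of "-t"] by simp
        ultimately have "h ((-t) *\<^sub>R w) - p ((-t) *\<^sub>R (w - x0)) \<le> (-t) * xi" by simp
        then show ?thesis unfolding tw tw2 by simp
      qed
    qed
    have memM': "(u + t *\<^sub>R x0, h u + t * xi) \<in> M'" if "u \<in> D" for u t
      unfolding M'_def using that by blast
    have M'E: "\<exists>u t. u \<in> D \<and> x = u + t *\<^sub>R x0 \<and> a = h u + t * xi" if "(x,a) \<in> M'" for x a
      using that unfolding M'_def by blast
    have "M' \<in> A"
      unfolding A_def mem_Collect_eq
    proof (rule ggI)
      fix x a b assume "(x,a) \<in> M'" "(x,b) \<in> M'"
      then obtain u t u' t' where "u \<in> D" "u' \<in> D" "x = u + t *\<^sub>R x0" "a = h u + t * xi"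
        "x = u' + t' *\<^sub>R x0" "b = h u' + t' * xi" using M'E by metis
      then show "a = b" using uniq[of u u' t t'] by simp
    next
      fix x a y b assume "(x,a) \<in> M'" "(y,b) \<in> M'"
      then obtain u t u' t' where "u \<in> D" "u' \<in> D" "x = u + t *\<^sub>R x0" "a = h u + t * xi"
        "y = u' + t' *\<^sub>R x0" "b = h u' + t' * xi" using M'E by metis
      moreover have "x + y = (u + u') + (t + t') *\<^sub>R x0" "a + b = h (u + u') + (t + t') * xi"
        using calculation by (simp_all add: h_add scaleR_add_left distrib_right)
      ultimately show "(x+y, a+b) \<in> M'" using memM'[OF D_add] by metis
    next
      fix x a c assume "(x,a) \<in> M'"
      then obtain u t where "u \<in> D" "x = u + t *\<^sub>R x0" "a = h u + t * xi" using M'E by metis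
      moreover have "c *\<^sub>R x = (c *\<^sub>R u) + (c * t) *\<^sub>R x0" "c * a = h (c *\<^sub>R u) + (c * t) * xi"
        using calculation by (simp_all add: h_scale scaleR_add_right distrib_left)
      ultimately show "(c *\<^sub>R x, c*a) \<in> M'" using memM'[OF D_scale] by metis
    next
      fix x assume "x \<in> F"
      then have "x \<in> D" "h x = f x" using FD hF by auto
      then show "(x, f x) \<in> M'" using memM'[of x 0] by simp
    next
      fix x a assume "(x,a) \<in> M'"
      then obtain u t where "u \<in> D" "x = u + t *\<^sub>R x0" using M'E by metis
      then show "x \<in> E" using E_add E_scale DE' x0E by metis
    next
      fix x a assume "(x,a) \<in> M'"
      then obtain u t where "u \<in> D" "x = u + t *\<^sub>R x0" "a = h u + t * xi" using M'E by metis
      then show "a \<le> p x" using bound by simp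
    qed
    moreover have "M \<subseteq> M'"
    proof
      fix z assume "z \<in> M"
      then obtain x a where z: "z = (x,a)" "(x,a) \<in> M" by (cases z) auto
      then have "x \<in> D" "a = h x" using Mh inD by blast+
      then show "z \<in> M'" unfolding z using memM'[of x 0] by simp
    qed
    ultimately have "M' = M" using Mmax by blast
    moreover have "h 0 = 0" using h_scale[OF D0, of 0] by simp
    then have "(x0, xi) \<in> M'" using memM'[OF D0, of 1] by simp
    ultimately have "x0 \<in> D" using inD by blast
    then show False using x0D by simp
  qed
  show ?thesis
    using hF h_add h_scale h_le DeqE by (intro exI[of _ h]) auto
qed


definition dd :: "'b::real_vector set \<Rightarrow> 'b set" where
  "dd A = {x - y | x y. x \<in> A \<and> y \<in> A}"

definition sdim :: "'b::real_vector set \<Rightarrow> enat" where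
  "sdim S = Sup {enat (card B) | B. finite B \<and> independent B \<and> B \<subseteq> S}"

lemma span_dd_shift:
  assumes "a \<in> A"
  shows "span ((\<lambda>x. x - a) ` A) = span (dd A)"
  unfolding span_eq
proof
  show "(\<lambda>x. x - a) ` A \<subseteq> span (dd A)"
    using assms by (auto simp: dd_def intro!: span_base)
  show "dd A \<subseteq> span ((\<lambda>x. x - a) ` A)"
  proof
    fix z assume "z \<in> dd A"
    then obtain x y where xy: "x \<in> A" "y \<in> A" "z = x - y" unfolding dd_def by blast
    have "x - a \<in> span ((\<lambda>x. x - a) ` A)" "y - a \<in> span ((\<lambda>x. x - a) ` A)"
      using xy by (auto intro!: span_base)
    then have "(x - a) - (y - a) \<in> span ((\<lambda>x. x - a) ` A)" by (rule span_diff)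
    then show "z \<in> span ((\<lambda>x. x - a) ` A)" using xy by simp
  qed
qed

lemma set_dim_dd: "set_dim A = sdim (span (dd A))"
proof (cases "A = {}")
  case True
  then show ?thesis unfolding set_dim_def sdim_def dd_def Let_def by simp
next
  case False
  then have "(SOME a. a \<in> A) \<in> A" by (auto intro: someI_ex)
  then show ?thesis unfolding set_dim_def sdim_def Let_def span_dd_shift[OF \<open>(SOME a. a \<in> A) \<in> A\<close>] by simp
qed

lemma sdim_mono: "S \<subseteq> T \<Longrightarrow> sdim S \<le> sdim T"
  unfolding sdim_def by (rule Sup_subset_mono) blast

lemma set_dim_le: "dd A \<subseteq> span (dd A') \<Longrightarrow> set_dim A \<le> set_dim A'"
  unfolding set_dim_dd by (rule sdim_mono, rule span_minimal) (auto simp: subspace_span)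

lemma set_dim_zero: "dd A \<subseteq> {0} \<Longrightarrow> set_dim A = 0"
proof -
  assume a: "dd A \<subseteq> {0}"
  have s: "span (dd A) \<subseteq> {0}" by (rule span_minimal[OF a]) simp
  have "sdim (span (dd A)) \<le> 0"
    unfolding sdim_def
  proof (rule Sup_least, clarify)
    fix B assume "finite B" "independent B" "B \<subseteq> span (dd A)"
    then have "B = {}" using s dependent_zero by blast
    then show "enat (card B) \<le> 0" by (simp add: zero_enat_def)
  qed
  then show ?thesis unfolding set_dim_dd by simp
qed

lemma set_dim_neg_shift: "set_dim ((\<lambda>h. e - h) ` A) = set_dim A"
proof (rule antisym; rule set_dim_le)
  show "dd ((\<lambda>h. e - h) ` A) \<subseteq> span (dd A)"
  proof
    fix z assume "z \<in> dd ((\<lambda>h. e - h) ` A)"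
    then obtain x y where "x \<in> A" "y \<in> A" "z = (e - x) - (e - y)" unfolding dd_def by blast
    then have "z \<in> dd A" unfolding dd_def by force
    then show "z \<in> span (dd A)" by (rule span_base)
  qed
  show "dd A \<subseteq> span (dd ((\<lambda>h. e - h) ` A))"
  proof
    fix z assume "z \<in> dd A"
    then obtain x y where "x \<in> A" "y \<in> A" "z = x - y" unfolding dd_def by blast
    then have "z = (e - y) - (e - x)" by simp
    then have "z \<in> dd ((\<lambda>h. e - h) ` A)" unfolding dd_def using \<open>x \<in> A\<close> \<open>y \<in> A\<close> by blast
    then show "z \<in> span (dd ((\<lambda>h. e - h) ` A))" by (rule span_base)
  qed
qed

lemma set_dim_scale:
  assumes "r \<noteq> 0"
  shows "set_dim (scaleR r ` A) = set_dim A"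
proof (rule antisym; rule set_dim_le)
  show "dd (scaleR r ` A) \<subseteq> span (dd A)"
  proof
    fix z assume "z \<in> dd (scaleR r ` A)"
    then obtain x y where "x \<in> A" "y \<in> A" "z = r *\<^sub>R x - r *\<^sub>R y" unfolding dd_def by blast
    moreover have "x - y \<in> span (dd A)" using \<open>x \<in> A\<close> \<open>y \<in> A\<close> unfolding dd_def by (blast intro: span_base)
    ultimately show "z \<in> span (dd A)" using span_scale[of "x - y" "dd A" r] by (simp add: scaleR_diff_right)
  qed
  show "dd A \<subseteq> span (dd (scaleR r ` A))"
  proof
    fix z assume "z \<in> dd A"
    then obtain x y where "x \<in> A" "y \<in> A" "z = x - y" unfolding dd_def by blast
    have "r *\<^sub>R x - r *\<^sub>R y \<in> span (dd (scaleR r ` A))"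
      using \<open>x \<in> A\<close> \<open>y \<in> A\<close> unfolding dd_def by (blast intro: span_base)
    then have "(1/r) *\<^sub>R (r *\<^sub>R x - r *\<^sub>R y) \<in> span (dd (scaleR r ` A))" by (rule span_scale)
    then show "z \<in> span (dd (scaleR r ` A))" using assms \<open>z = x - y\<close> by (simp add: scaleR_diff_right)
  qed
qed


definition res :: "'a::real_normed_vector set \<Rightarrow> ('a \<Rightarrow>\<^sub>L real) \<Rightarrow> 'a \<Rightarrow> real" where
  "res Y f = (\<lambda>x. if x \<in> Y then blinfun_apply f x else 0)"

lemma babs: "\<bar>blinfun_apply f x\<bar> \<le> norm f * norm (x::'a::real_normed_vector)"
  using norm_blinfun[of f x] by simp

lemma res_on: "y \<in> Y \<Longrightarrow> res Y f y = blinfun_apply f y"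
  unfolding res_def by simp

lemma res_dual: "subspace Y \<Longrightarrow> res Y f \<in> dual_on Y"
  unfolding dual_on_def res_def
  by (auto simp: subspace_add subspace_scale blinfun.add_right blinfun.scaleR_right
           intro!: exI[of _ "norm f"] babs)

lemma dual_onD:
  assumes "g \<in> dual_on Y"
  shows "\<And>x y. x \<in> Y \<Longrightarrow> y \<in> Y \<Longrightarrow> g (x + y) = g x + g y"
    and "\<And>c x. x \<in> Y \<Longrightarrow> g (c *\<^sub>R x) = c * g x"
    and "\<exists>B. \<forall>x\<in>Y. \<bar>g x\<bar> \<le> B * norm x"
    and "\<And>x. x \<notin> Y \<Longrightarrow> g x = 0"
  using assms unfolding dual_on_def by auto

lemma dn_cong: "(\<And>y. y \<in> Y \<Longrightarrow> g1 y = g2 y) \<Longrightarrow> dual_norm_on Y g1 = dual_norm_on Y g2"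
  unfolding dual_norm_on_def by (metis (no_types, lifting))

lemma HB_cong: "(\<And>y. y \<in> Y \<Longrightarrow> g1 y = g2 y) \<Longrightarrow> HB Y g1 = HB Y g2"
  using dn_cong[of Y g1 g2] unfolding HB_def by auto

lemma DN0:
  assumes Y: "subspace Y" and g: "g \<in> dual_on Y"
  shows "bdd_above {\<bar>g y\<bar> | y. y \<in> Y \<and> norm y \<le> 1}" and "g 0 = 0" and "0 \<le> dual_norm_on Y g"
proof -
  obtain B where B: "\<And>x. x \<in> Y \<Longrightarrow> \<bar>g x\<bar> \<le> B * norm x" using dual_onD(3)[OF g] by blast
  show bdd: "bdd_above {\<bar>g y\<bar> | y. y \<in> Y \<and> norm y \<le> 1}"
    unfolding bdd_above_def
  proof (intro exI[of _ "max B 0"] allI impI ballI, clarify)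
    fix y assume "y \<in> Y" "norm y \<le> 1"
    have "B * norm y \<le> max B 0"
    proof (cases "B \<ge> 0")
      case True then show ?thesis using \<open>norm y \<le> 1\<close> mult_left_le[of "norm y" B] by simp
    next
      case False then show ?thesis by (simp add: mult_nonpos_nonneg)
    qed
    then show "\<bar>g y\<bar> \<le> max B 0" using B[OF \<open>y \<in> Y\<close>] by linarith
  qed
  show g0: "g 0 = 0" using B[of 0] Y subspace_0 by fastforce
  have "\<bar>g 0\<bar> \<in> {\<bar>g y\<bar> | y. y \<in> Y \<and> norm y \<le> 1}" using Y subspace_0 by fastforce
  then have "\<bar>g 0\<bar> \<le> dual_norm_on Y g" unfolding dual_norm_on_def by (rule cSup_upper[OF _ bdd])
  then show "0 \<le> dual_norm_on Y g" using g0 by simp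
qed

lemma DN1:
  assumes Y: "subspace Y" and g: "g \<in> dual_on Y" and y: "y \<in> Y"
  shows "\<bar>g y\<bar> \<le> dual_norm_on Y g * norm y"
proof (cases "y = 0")
  case True then show ?thesis using DN0[OF Y g] by simp
next
  case False
  define z where "z = (1 / norm y) *\<^sub>R y"
  have zY: "z \<in> Y" unfolding z_def using Y y by (rule subspace_scale)
  have nz: "norm z \<le> 1" unfolding z_def using False by simp
  have "\<bar>g z\<bar> \<in> {\<bar>g y\<bar> | y. y \<in> Y \<and> norm y \<le> 1}" using zY nz by blast
  then have "\<bar>g z\<bar> \<le> dual_norm_on Y g" unfolding dual_norm_on_def by (rule cSup_upper[OF _ DN0(1)[OF Y g]])
  moreover have "g z = g y / norm y" unfolding z_def using dual_onD(2)[OF g y] by simp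
  ultimately have "\<bar>g y\<bar> / norm y \<le> dual_norm_on Y g" by simp
  then show ?thesis using False by (simp add: divide_le_eq)
qed

lemma DN2:
  assumes Y: "subspace Y" and c: "0 \<le> c" and b: "\<And>y. y \<in> Y \<Longrightarrow> \<bar>g y\<bar> \<le> c * norm y"
  shows "dual_norm_on Y g \<le> c"
  unfolding dual_norm_on_def
proof (rule cSup_least)
  show "{\<bar>g y\<bar> | y. y \<in> Y \<and> norm y \<le> 1} \<noteq> {}" using Y subspace_0 by fastforce
next
  fix x assume "x \<in> {\<bar>g y\<bar> | y. y \<in> Y \<and> norm y \<le> 1}"
  then obtain y where "y \<in> Y" "norm y \<le> 1" "x = \<bar>g y\<bar>" by blast
  moreover have "c * norm y \<le> c" using c \<open>norm y \<le> 1\<close> mult_left_le by blast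
  ultimately show "x \<le> c" using b by force
qed

definition qn :: "'a::real_normed_vector set \<Rightarrow> ('a \<Rightarrow>\<^sub>L real) \<Rightarrow> real" where
  "qn Y f = dual_norm_on Y (res Y f)"

lemma qn_nonneg: "subspace Y \<Longrightarrow> 0 \<le> qn Y f"
  unfolding qn_def using DN0(3)[OF _ res_dual] by blast

lemma qn_bound: "subspace Y \<Longrightarrow> y \<in> Y \<Longrightarrow> \<bar>blinfun_apply f y\<bar> \<le> qn Y f * norm y"
  unfolding qn_def using DN1[OF _ res_dual] res_on by metis

lemma qn_le_norm: "subspace Y \<Longrightarrow> qn Y f \<le> norm f"
  unfolding qn_def by (rule DN2) (auto simp: res_on babs)

lemma qn_add: assumes Y: "subspace Y" shows "qn Y (f1 + f2) \<le> qn Y f1 + qn Y f2"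
  unfolding qn_def[of Y "f1 + f2"]
proof (rule DN2[OF Y])
  show "0 \<le> qn Y f1 + qn Y f2" using qn_nonneg[OF Y] by (simp add: add_nonneg_nonneg)
  fix y assume y: "y \<in> Y"
  have "\<bar>res Y (f1 + f2) y\<bar> = \<bar>blinfun_apply f1 y + blinfun_apply f2 y\<bar>" using y by (simp add: res_on blinfun.add_left)
  also have "\<dots> \<le> \<bar>blinfun_apply f1 y\<bar> + \<bar>blinfun_apply f2 y\<bar>" by (rule abs_triangle_ineq)
  also have "\<dots> \<le> qn Y f1 * norm y + qn Y f2 * norm y" using qn_bound[OF Y y] by (metis add_mono)
  finally show "\<bar>res Y (f1 + f2) y\<bar> \<le> (qn Y f1 + qn Y f2) * norm y" by (simp add: distrib_right)
qed

lemma qn_scale_le: assumes Y: "subspace Y" shows "qn Y (c *\<^sub>R f) \<le> \<bar>c\<bar> * qn Y f"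
  unfolding qn_def[of Y "c *\<^sub>R f"]
proof (rule DN2[OF Y])
  show "0 \<le> \<bar>c\<bar> * qn Y f" using qn_nonneg[OF Y] by simp
  fix y assume y: "y \<in> Y"
  have "\<bar>res Y (c *\<^sub>R f) y\<bar> = \<bar>c\<bar> * \<bar>blinfun_apply f y\<bar>" using y by (simp add: res_on abs_mult blinfun.scaleR_left)
  also have "\<dots> \<le> \<bar>c\<bar> * (qn Y f * norm y)" using qn_bound[OF Y y] by (simp add: mult_left_mono)
  finally show "\<bar>res Y (c *\<^sub>R f) y\<bar> \<le> \<bar>c\<bar> * qn Y f * norm y" by (simp add: mult.assoc)
qed

lemma qn_scale: assumes Y: "subspace Y" shows "qn Y (c *\<^sub>R f) = \<bar>c\<bar> * qn Y f"
proof (cases "c = 0")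
  case True
  have "qn Y (c *\<^sub>R f) \<le> 0" using qn_scale_le[OF Y, of c f] True by simp
  then show ?thesis using qn_nonneg[OF Y, of "c *\<^sub>R f"] True by simp
next
  case False
  have "qn Y f = qn Y ((1/c) *\<^sub>R (c *\<^sub>R f))" using False by simp
  also have "\<dots> \<le> \<bar>1/c\<bar> * qn Y (c *\<^sub>R f)" by (rule qn_scale_le[OF Y])
  finally have "\<bar>c\<bar> * qn Y f \<le> qn Y (c *\<^sub>R f)" using False by (simp add: field_simps)
  then show ?thesis using qn_scale_le[OF Y, of c f] by simp
qed

lemma qn_zero: assumes Y: "subspace Y" and v: "\<And>y. y \<in> Y \<Longrightarrow> blinfun_apply v y = 0"
  shows "qn Y v = 0"
proof -
  have "qn Y v \<le> 0" unfolding qn_def by (rule DN2[OF Y]) (auto simp: res_on v)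
  then show ?thesis using qn_nonneg[OF Y, of v] by simp
qed

lemma qn_cong: "(\<And>y. y \<in> Y \<Longrightarrow> blinfun_apply f y = g y) \<Longrightarrow> qn Y f = dual_norm_on Y g"
  unfolding qn_def by (rule dn_cong) (simp add: res_on)


lemma blinfun_ext:
  fixes g :: "'a::real_normed_vector \<Rightarrow> real"
  assumes Y: "subspace Y" and c: "0 \<le> c"
    and gadd: "\<And>x y. x \<in> Y \<Longrightarrow> y \<in> Y \<Longrightarrow> g (x + y) = g x + g y"
    and gscale: "\<And>x a. x \<in> Y \<Longrightarrow> g (a *\<^sub>R x) = a * g x"
    and gb: "\<And>y. y \<in> Y \<Longrightarrow> \<bar>g y\<bar> \<le> c * norm y"
  shows "\<exists>f. (\<forall>y\<in>Y. blinfun_apply f y = g y) \<and> norm f \<le> c"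
proof -
  have "\<exists>h. (\<forall>x\<in>Y. h x = g x) \<and> (\<forall>x\<in>UNIV. \<forall>y\<in>UNIV. h (x + y) = h x + h y)
           \<and> (\<forall>x\<in>UNIV. \<forall>a. h (a *\<^sub>R x) = a * h x) \<and> (\<forall>x\<in>UNIV. h x \<le> c * norm x)"
  proof (rule hahn_banach_gen[OF subspace_UNIV Y])
    show "\<And>x y. c * norm (x + y) \<le> c * norm x + c * norm y"
      using c norm_triangle_ineq by (metis distrib_left mult_left_mono)
    show "\<And>x a. 0 \<le> a \<Longrightarrow> c * norm (a *\<^sub>R x) = a * (c * norm x)" by simp
    show "\<And>x. x \<in> Y \<Longrightarrow> g x \<le> c * norm x" using gb by fastforce
  qed (use gadd gscale in auto)
  then obtain h where hg: "\<And>x. x \<in> Y \<Longrightarrow> h x = g x" and hadd: "\<And>x y. h (x + y) = h x + h y"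
    and hscale: "\<And>x a. h (a *\<^sub>R x) = a * h x" and hle: "\<And>x. h x \<le> c * norm x" by auto
  have habs: "\<bar>h x\<bar> \<le> c * norm x" for x
  proof -
    have "- h x = h ((-1) *\<^sub>R x)" using hscale[of "-1" x] by simp
    also have "\<dots> \<le> c * norm ((-1) *\<^sub>R x)" by (rule hle)
    finally show ?thesis using hle[of x] by simp
  qed
  have bl: "bounded_linear h"
  proof (rule bounded_linear_intro[where K = c])
    show "\<And>x y. h (x + y) = h x + h y" by (rule hadd)
    show "\<And>r x. h (r *\<^sub>R x) = r *\<^sub>R h x" using hscale by simp
    show "\<And>x. norm (h x) \<le> norm x * c" using habs by (simp add: mult.commute)
  qed
  show ?thesis
  proof (intro exI[of _ "Blinfun h"] conjI ballI)
    show "\<And>y. y \<in> Y \<Longrightarrow> blinfun_apply (Blinfun h) y = g y" using bl hg by (simp add: bounded_linear_Blinfun_apply)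
    show "norm (Blinfun h) \<le> c"
      by (rule norm_blinfun_bound[OF c]) (use bl habs in \<open>simp add: bounded_linear_Blinfun_apply\<close>)
  qed
qed

lemma HB_nonempty:
  assumes Y: "subspace Y" and g: "g \<in> dual_on Y"
  shows "\<exists>f. f \<in> HB Y g"
proof -
  obtain f where f: "\<forall>y\<in>Y. blinfun_apply f y = g y" and nf: "norm f \<le> dual_norm_on Y g"
    using blinfun_ext[OF Y DN0(3)[OF Y g] dual_onD(1,2)[OF g] DN1[OF Y g]] by blast
  have "dual_norm_on Y g \<le> norm f"
    by (rule DN2[OF Y norm_ge_zero]) (use f babs in metis)
  then show ?thesis using f nf unfolding HB_def by (intro exI[of _ f]) auto
qed

lemma norming:
  fixes y :: "'a::real_normed_vector"
  shows "\<exists>f. norm f \<le> 1 \<and> blinfun_apply f y = norm y"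
proof (cases "y = 0")
  case True then show ?thesis by (intro exI[of _ 0]) simp
next
  case False
  define co where "co v = (SOME t. v = t *\<^sub>R y)" for v
  have co: "co (t *\<^sub>R y) = t" for t
    unfolding co_def using False by (rule_tac some_equality) auto
  have sp: "v \<in> span {y} \<longleftrightarrow> (\<exists>t. v = t *\<^sub>R y)" for v
    by (auto simp: span_singleton)
  define g where "g v = co v * norm y" for v
  have "\<exists>f. (\<forall>v\<in>span {y}. blinfun_apply f v = g v) \<and> norm f \<le> 1"
  proof (rule blinfun_ext[OF subspace_span])
    show "\<And>a b. a \<in> span {y} \<Longrightarrow> b \<in> span {y} \<Longrightarrow> g (a + b) = g a + g b"
    proof -
      fix a b assume "a \<in> span {y}" "b \<in> span {y}"
      then obtain s t where "a = s *\<^sub>R y" "b = t *\<^sub>R y" using sp by blast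
      then show "g (a + b) = g a + g b" unfolding g_def using co[of "s + t"] co[of s] co[of t]
        by (simp add: scaleR_add_left distrib_right)
    qed
    show "\<And>a r. a \<in> span {y} \<Longrightarrow> g (r *\<^sub>R a) = r * g a"
    proof -
      fix a r assume "a \<in> span {y}"
      then obtain s where "a = s *\<^sub>R y" using sp by blast
      then show "g (r *\<^sub>R a) = r * g a" unfolding g_def using co[of "r * s"] co[of s] by simp
    qed
    show "\<And>a. a \<in> span {y} \<Longrightarrow> \<bar>g a\<bar> \<le> 1 * norm a"
    proof -
      fix a assume "a \<in> span {y}"
      then obtain s where "a = s *\<^sub>R y" using sp by blast
      then show "\<bar>g a\<bar> \<le> 1 * norm a" unfolding g_def using co[of s] by (simp add: abs_mult)
    qed
  qed simp
  then obtain f where f: "\<forall>v\<in>span {y}. blinfun_apply f v = g v" and nf: "norm f \<le> 1" by blast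
  have "blinfun_apply f y = g y" using f span_base[of y "{y}"] by simp
  also have "g y = norm y" unfolding g_def using co[of 1] by simp
  finally show ?thesis using nf by blast
qed

lemma annihilator_subspace: "subspace (annihilator Y)"
  unfolding subspace_def annihilator_def by (simp add: blinfun.add_left blinfun.scaleR_left)

lemma metric_proj_eq:
  assumes Y: "subspace Y"
  shows "metric_proj (annihilator Y) e = (\<lambda>h. e - h) ` HB Y (res Y e)"
proof -
  have low: "qn Y e \<le> norm (e - n)" if "n \<in> annihilator Y" for n
  proof -
    have "qn Y (e - n) = qn Y e"
      using that unfolding qn_def annihilator_def by (intro dn_cong) (simp add: res_on blinfun.diff_left)
    then show ?thesis using qn_le_norm[OF Y, of "e - n"] by simp
  qed
  obtain h0 where h0: "h0 \<in> HB Y (res Y e)" using HB_nonempty[OF Y res_dual[OF Y]] by blast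
  have HBq: "norm h = qn Y e" and HBon: "\<And>y. y \<in> Y \<Longrightarrow> blinfun_apply h y = blinfun_apply e y"
    if "h \<in> HB Y (res Y e)" for h
    using that unfolding HB_def qn_def by (auto simp: res_on)
  have inN: "e - h \<in> annihilator Y" if "h \<in> HB Y (res Y e)" for h
    using HBon[OF that] unfolding annihilator_def by (simp add: blinfun.diff_left)
  show ?thesis
  proof
    show "metric_proj (annihilator Y) e \<subseteq> (\<lambda>h. e - h) ` HB Y (res Y e)"
    proof
      fix v assume "v \<in> metric_proj (annihilator Y) e"
      then have vN: "v \<in> annihilator Y" and vm: "\<And>w. w \<in> annihilator Y \<Longrightarrow> norm (e - v) \<le> norm (e - w)"
        unfolding metric_proj_def by auto
      have "norm (e - v) \<le> norm (e - (e - h0))" by (rule vm[OF inN[OF h0]])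
      then have "norm (e - v) \<le> qn Y e" using HBq[OF h0] by simp
      then have "norm (e - v) = qn Y e" using low[OF vN] by simp
      moreover have "\<And>y. y \<in> Y \<Longrightarrow> blinfun_apply (e - v) y = res Y e y"
        using vN unfolding annihilator_def by (simp add: res_on blinfun.diff_left)
      ultimately have "e - v \<in> HB Y (res Y e)" unfolding HB_def qn_def by simp
      then show "v \<in> (\<lambda>h. e - h) ` HB Y (res Y e)" by (rule image_eqI[rotated]) simp
    qed
    show "(\<lambda>h. e - h) ` HB Y (res Y e) \<subseteq> metric_proj (annihilator Y) e"
    proof clarify
      fix h assume h: "h \<in> HB Y (res Y e)"
      show "e - h \<in> metric_proj (annihilator Y) e"
        unfolding metric_proj_def using inN[OF h] HBq[OF h] low by simp
    qed
  qed
qed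

lemma proximinal_ann: "subspace Y \<Longrightarrow> proximinal (annihilator Y)"
  unfolding proximinal_def using metric_proj_eq HB_nonempty res_dual by fastforce


lemma dual_on_scale: "g \<in> dual_on Y \<Longrightarrow> (\<lambda>x. c * g x) \<in> dual_on Y"
proof -
  assume g: "g \<in> dual_on Y"
  obtain B where B: "\<forall>x\<in>Y. \<bar>g x\<bar> \<le> B * norm x" using dual_onD(3)[OF g] by blast
  have "\<forall>x\<in>Y. \<bar>c * g x\<bar> \<le> (\<bar>c\<bar> * B) * norm x"
    using B by (simp add: abs_mult mult.assoc mult_left_mono)
  then have "\<exists>B. \<forall>x\<in>Y. \<bar>c * g x\<bar> \<le> B * norm x" by blast
  then show ?thesis using dual_onD(1,2,4)[OF g] unfolding dual_on_def by (auto simp: algebra_simps)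
qed

lemma dual_on_add: "g1 \<in> dual_on Y \<Longrightarrow> g2 \<in> dual_on Y \<Longrightarrow> (\<lambda>x. g1 x + g2 x) \<in> dual_on Y"
proof -
  assume g1: "g1 \<in> dual_on Y" and g2: "g2 \<in> dual_on Y"
  obtain B1 where B1: "\<forall>x\<in>Y. \<bar>g1 x\<bar> \<le> B1 * norm x" using dual_onD(3)[OF g1] by blast
  obtain B2 where B2: "\<forall>x\<in>Y. \<bar>g2 x\<bar> \<le> B2 * norm x" using dual_onD(3)[OF g2] by blast
  have "\<forall>x\<in>Y. \<bar>g1 x + g2 x\<bar> \<le> (B1 + B2) * norm x"
  proof
    fix x assume "x \<in> Y"
    then have "\<bar>g1 x\<bar> + \<bar>g2 x\<bar> \<le> (B1 + B2) * norm x" using B1 B2 by (simp add: distrib_right add_mono)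
    then show "\<bar>g1 x + g2 x\<bar> \<le> (B1 + B2) * norm x" using abs_triangle_ineq[of "g1 x" "g2 x"] by linarith
  qed
  then have "\<exists>B. \<forall>x\<in>Y. \<bar>g1 x + g2 x\<bar> \<le> B * norm x" by blast
  then show ?thesis using dual_onD(1,2,4)[OF g1] dual_onD(1,2,4)[OF g2] unfolding dual_on_def
    by (auto simp: algebra_simps)
qed

lemma HB_dim_gen:
  assumes Y: "subspace Y"
    and H: "\<And>g. g \<in> dual_on Y \<Longrightarrow> dual_norm_on Y g = 1 \<Longrightarrow> set_dim (HB Y g) \<le> m"
    and g: "g \<in> dual_on Y"
  shows "set_dim (HB Y g) \<le> m"
proof -
  define r where "r = dual_norm_on Y g"
  have r0: "0 \<le> r" unfolding r_def using DN0(3)[OF Y g] .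
  show ?thesis
  proof (cases "r = 0")
    case True
    have "HB Y g \<subseteq> {0}" using True unfolding HB_def r_def by auto
    then have "dd (HB Y g) \<subseteq> {0}" unfolding dd_def by (smt (verit) diff_self mem_Collect_eq singletonD subset_iff)
    then show ?thesis using set_dim_zero by (metis zero_le)
  next
    case False
    then have rp: "r > 0" using r0 by simp
    define g1 where "g1 = (\<lambda>x. (1/r) * g x)"
    have g1d: "g1 \<in> dual_on Y" unfolding g1_def using g by (rule dual_on_scale)
    obtain f where f: "f \<in> HB Y g" using HB_nonempty[OF Y g] by blast
    have fon: "\<And>y. y \<in> Y \<Longrightarrow> blinfun_apply f y = g y" using f unfolding HB_def by auto
    have "dual_norm_on Y g1 = qn Y ((1/r) *\<^sub>R f)"
      by (rule qn_cong[symmetric]) (simp add: g1_def fon blinfun.scaleR_left)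
    also have "\<dots> = (1/r) * qn Y f" using qn_scale[OF Y] rp by simp
    also have "qn Y f = r" unfolding r_def by (rule qn_cong) (simp add: fon)
    finally have n1: "dual_norm_on Y g1 = 1" using rp by simp
    have "HB Y g = scaleR r ` HB Y g1"
    proof
      show "HB Y g \<subseteq> scaleR r ` HB Y g1"
      proof
        fix h assume h: "h \<in> HB Y g"
        have "(1/r) *\<^sub>R h \<in> HB Y g1"
          using h rp n1 unfolding HB_def g1_def r_def by (auto simp: blinfun.scaleR_left)
        moreover have "h = r *\<^sub>R ((1/r) *\<^sub>R h)" using rp by simp
        ultimately show "h \<in> scaleR r ` HB Y g1" by blast
      qed
      show "scaleR r ` HB Y g1 \<subseteq> HB Y g"
      proof clarify
        fix h assume h: "h \<in> HB Y g1"
        then show "r *\<^sub>R h \<in> HB Y g"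
          using rp n1 unfolding HB_def g1_def r_def by (auto simp: blinfun.scaleR_left)
      qed
    qed
    then have "set_dim (HB Y g) = set_dim (HB Y g1)" using set_dim_scale[of r "HB Y g1"] rp by simp
    then show ?thesis using H[OF g1d n1] by simp
  qed
qed


lemma norm_attain:
  fixes Y :: "'a::real_normed_vector set"
  assumes Y: "subspace Y" and refl: "reflexive_on Y" and g: "g \<in> dual_on Y"
    and g1: "dual_norm_on Y g = 1"
  shows "\<exists>y\<in>Y. norm y = 1 \<and> g y = 1"
proof -
  obtain f0 where f0: "f0 \<in> HB Y g" using HB_nonempty[OF Y g] by blast
  have f0on: "\<And>y. y \<in> Y \<Longrightarrow> blinfun_apply f0 y = g y" and nf0: "norm f0 = 1"
    using f0 g1 unfolding HB_def by auto
  have "f0 \<noteq> 0" using nf0 by auto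
  then obtain x1 where x1: "blinfun_apply f0 x1 \<noteq> 0" by (metis blinfun_eqI zero_blinfun.rep_eq)
  define psi where "psi v = blinfun_apply v x1 / blinfun_apply f0 x1" for v :: "'a \<Rightarrow>\<^sub>L real"
  have qf0: "qn Y f0 = 1" using qn_cong[of Y f0 g] f0on g1 by simp
  have "\<exists>h. (\<forall>x\<in>span {f0}. h x = psi x) \<and> (\<forall>x\<in>UNIV. \<forall>y\<in>UNIV. h (x + y) = h x + h y)
           \<and> (\<forall>x\<in>UNIV. \<forall>c. h (c *\<^sub>R x) = c * h x) \<and> (\<forall>x\<in>UNIV. h x \<le> qn Y x)"
  proof (rule hahn_banach_gen[OF subspace_UNIV subspace_span])
    show "\<And>x y. qn Y (x + y) \<le> qn Y x + qn Y y" by (rule qn_add[OF Y])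
    show "\<And>x c. 0 \<le> c \<Longrightarrow> qn Y (c *\<^sub>R x) = c * qn Y x" using qn_scale[OF Y] by simp
    show "\<And>x y. psi (x + y) = psi x + psi y" unfolding psi_def by (simp add: blinfun.add_left add_divide_distrib)
    show "\<And>x c. psi (c *\<^sub>R x) = c * psi x" unfolding psi_def by (simp add: blinfun.scaleR_left)
    show "\<And>x. x \<in> span {f0} \<Longrightarrow> psi x \<le> qn Y x"
    proof -
      fix x assume "x \<in> span {f0}"
      then obtain t where t: "x = t *\<^sub>R f0" by (auto simp: span_singleton)
      have "psi x = t" unfolding psi_def t using x1 by (simp add: blinfun.scaleR_left)
      moreover have "qn Y x = \<bar>t\<bar>" unfolding t using qn_scale[OF Y] qf0 by simp
      ultimately show "psi x \<le> qn Y x" by simp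
    qed
  qed auto
  then obtain Psi where Psi_f0: "\<And>x. x \<in> span {f0} \<Longrightarrow> Psi x = psi x"
    and Padd: "\<And>x y. Psi (x + y) = Psi x + Psi y" and Pscale: "\<And>x c. Psi (c *\<^sub>R x) = c * Psi x"
    and Ple: "\<And>x. Psi x \<le> qn Y x" by auto
  have P1: "Psi f0 = 1" using Psi_f0[OF span_base[of f0 "{f0}"]] x1 unfolding psi_def by simp
  have Pabs: "\<bar>Psi v\<bar> \<le> qn Y v" for v
  proof -
    have "- Psi v = Psi ((-1) *\<^sub>R v)" using Pscale[of "-1" v] by simp
    also have "\<dots> \<le> qn Y ((-1) *\<^sub>R v)" by (rule Ple)
    also have "\<dots> = qn Y v" using qn_scale[OF Y, of "-1" v] by simp
    finally show ?thesis using Ple[of v] by simp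
  qed
  have Pzero: "Psi v = 0" if "\<And>y. y \<in> Y \<Longrightarrow> blinfun_apply v y = 0" for v
    using Pabs[of v] qn_zero[OF Y that] by simp
  define ext where "ext g' = (SOME f. f \<in> HB Y g')" for g'
  have ext: "ext g' \<in> HB Y g'" if "g' \<in> dual_on Y" for g'
    unfolding ext_def using HB_nonempty[OF Y that] by (rule someI_ex)
  have exton: "blinfun_apply (ext g') y = g' y" if "g' \<in> dual_on Y" "y \<in> Y" for g' y
    using ext[OF that(1)] that(2) unfolding HB_def by auto
  define Phi where "Phi g' = Psi (ext g')" for g'
  have Psplit: "Psi u = Psi w" if "\<And>y. y \<in> Y \<Longrightarrow> blinfun_apply u y = blinfun_apply w y" for u w
  proof -
    have "Psi u = Psi ((u - w) + w)" by simp
    also have "\<dots> = Psi (u - w) + Psi w" by (rule Padd)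
    also have "Psi (u - w) = 0" by (rule Pzero) (simp add: that blinfun.diff_left)
    finally show ?thesis by simp
  qed
  have Phi_bound: "\<bar>Phi g'\<bar> \<le> dual_norm_on Y g'" if "g' \<in> dual_on Y" for g'
  proof -
    have "qn Y (ext g') = dual_norm_on Y g'" by (rule qn_cong) (simp add: exton[OF that])
    then show ?thesis unfolding Phi_def using Pabs[of "ext g'"] by simp
  qed
  have hyp: "(\<forall>g\<in>dual_on Y. \<forall>h\<in>dual_on Y. Phi (\<lambda>x. g x + h x) = Phi g + Phi h)
        \<and> (\<forall>c. \<forall>g\<in>dual_on Y. Phi (\<lambda>x. c * g x) = c * Phi g)
        \<and> (\<exists>B. \<forall>g\<in>dual_on Y. \<bar>Phi g\<bar> \<le> B * dual_norm_on Y g)"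
  proof (intro conjI ballI allI)
    fix g1 g2 assume a: "g1 \<in> dual_on Y" "g2 \<in> dual_on Y"
    have d: "(\<lambda>x. g1 x + g2 x) \<in> dual_on Y" using dual_on_add[OF a] .
    have "Psi (ext (\<lambda>x. g1 x + g2 x)) = Psi (ext g1 + ext g2)"
      by (rule Psplit) (simp add: exton[OF d] exton[OF a(1)] exton[OF a(2)] blinfun.add_left)
    then show "Phi (\<lambda>x. g1 x + g2 x) = Phi g1 + Phi g2" unfolding Phi_def using Padd by simp
  next
    fix c g' assume a: "g' \<in> dual_on Y"
    have d: "(\<lambda>x. c * g' x) \<in> dual_on Y" using dual_on_scale[OF a] .
    have "Psi (ext (\<lambda>x. c * g' x)) = Psi (c *\<^sub>R ext g')"
      by (rule Psplit) (simp add: exton[OF d] exton[OF a] blinfun.scaleR_left)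
    then show "Phi (\<lambda>x. c * g' x) = c * Phi g'" unfolding Phi_def using Pscale by simp
  next
    show "\<exists>B. \<forall>g\<in>dual_on Y. \<bar>Phi g\<bar> \<le> B * dual_norm_on Y g"
      using Phi_bound by (intro exI[of _ 1]) simp
  qed
  obtain y where yY: "y \<in> Y" and yPhi: "\<And>g'. g' \<in> dual_on Y \<Longrightarrow> Phi g' = g' y"
    using refl hyp unfolding reflexive_on_def by blast
  have "Phi g = 1"
  proof -
    have "Psi (ext g) = Psi f0" by (rule Psplit) (simp add: exton[OF g] f0on)
    then show ?thesis unfolding Phi_def using P1 by simp
  qed
  then have gy: "g y = 1" using yPhi[OF g] by simp
  obtain fy where nfy: "norm fy \<le> 1" and fyy: "blinfun_apply fy y = norm y" using norming by blast
  have rd: "res Y fy \<in> dual_on Y" by (rule res_dual[OF Y])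
  have "norm y = \<bar>res Y fy y\<bar>" using fyy yY by (simp add: res_on)
  also have "\<dots> = \<bar>Phi (res Y fy)\<bar>" using yPhi[OF rd] by simp
  also have "\<dots> \<le> dual_norm_on Y (res Y fy)" by (rule Phi_bound[OF rd])
  also have "\<dots> = qn Y fy" unfolding qn_def ..
  also have "\<dots> \<le> 1" using qn_le_norm[OF Y, of fy] nfy by simp
  finally have ny1: "norm y \<le> 1" .
  have "1 \<le> \<bar>g y\<bar>" using gy by simp
  also have "\<dots> \<le> dual_norm_on Y g * norm y" by (rule DN1[OF Y g yY])
  finally have "1 \<le> norm y" using g1 by simp
  then show ?thesis using ny1 gy yY by (intro bexI[of _ y]) auto
qed


lemma enat_lt_le: "k \<ge> 1 \<Longrightarrow> (x::enat) < enat k \<Longrightarrow> x \<le> enat (k - 1)"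
  by (cases x) auto

theorem theorem4p5:
  fixes Y :: "'a::banach set" and k :: nat
  assumes "k \<ge> 1" and "subspace Y" and "closed Y"
  shows "(property_kU Y k \<longleftrightarrow> k_chebyshev (annihilator Y) k)
    \<and> (k_chebyshev (annihilator Y) k \<longrightarrow>
         (\<forall>x\<in>Y. norm x = 1 \<longrightarrow> (\<forall>f\<in>dual_sphere x.
            set_dim ((\<lambda>h. h - f) ` dual_sphere x \<inter> annihilator Y) < enat k)))
    \<and> (reflexive_on Y \<longrightarrow>
         (\<forall>x\<in>Y. norm x = 1 \<longrightarrow> (\<forall>f\<in>dual_sphere x.
            set_dim ((\<lambda>h. h - f) ` dual_sphere x \<inter> annihilator Y) < enat k))
         \<longrightarrow> k_chebyshev (annihilator Y) k)"
proof -
  note Y = assms(2)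
  have dimMP: "set_dim (metric_proj (annihilator Y) e) = set_dim (HB Y (res Y e))" for e
    using metric_proj_eq[OF Y, of e] set_dim_neg_shift by metis
  have kc_iff: "k_chebyshev (annihilator Y) k \<longleftrightarrow> (\<forall>e. set_dim (HB Y (res Y e)) \<le> enat (k - 1))"
    unfolding k_chebyshev_def using annihilator_subspace[of Y] proximinal_ann[OF Y] dimMP by simp
  have kc_from_norm1: "k_chebyshev (annihilator Y) k"
    if H: "\<And>g. g \<in> dual_on Y \<Longrightarrow> dual_norm_on Y g = 1 \<Longrightarrow> set_dim (HB Y g) \<le> enat (k - 1)"
    unfolding kc_iff using HB_dim_gen[OF Y H res_dual[OF Y]] by blast
  have ab: "property_kU Y k \<longleftrightarrow> k_chebyshev (annihilator Y) k"
  proof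
    assume "property_kU Y k"
    then show "k_chebyshev (annihilator Y) k" unfolding property_kU_def by (intro kc_from_norm1) auto
  next
    assume kc: "k_chebyshev (annihilator Y) k"
    show "property_kU Y k" unfolding property_kU_def
    proof (intro ballI impI)
      fix g assume g: "g \<in> dual_on Y" "dual_norm_on Y g = 1"
      obtain e where e: "e \<in> HB Y g" using HB_nonempty[OF Y g(1)] by blast
      have "HB Y (res Y e) = HB Y g"
        by (rule HB_cong) (use e in \<open>auto simp: res_on HB_def\<close>)
      then show "set_dim (HB Y g) \<le> enat (k - 1)" using kc unfolding kc_iff by metis
    qed
  qed
  have bc: "set_dim ((\<lambda>h. h - f) ` dual_sphere x \<inter> annihilator Y) < enat k"
    if kU: "property_kU Y k" and x: "x \<in> Y" "norm x = 1" and f: "f \<in> dual_sphere x" for x f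
  proof -
    have nf: "norm f = 1" and fx: "blinfun_apply f x = 1" using f x unfolding dual_sphere_def by auto
    have gd: "res Y f \<in> dual_on Y" by (rule res_dual[OF Y])
    have "qn Y f \<le> 1" using qn_le_norm[OF Y, of f] nf by simp
    moreover have "1 \<le> qn Y f" using qn_bound[OF Y x(1), of f] fx x by simp
    ultimately have gn: "dual_norm_on Y (res Y f) = 1" unfolding qn_def by simp
    have "set_dim ((\<lambda>h. h - f) ` dual_sphere x \<inter> annihilator Y) \<le> set_dim (HB Y (res Y f))"
    proof (rule set_dim_le)
      have mem: "h \<in> HB Y (res Y f)" if "h \<in> dual_sphere x" "h - f \<in> annihilator Y" for h
        using that gn unfolding dual_sphere_def annihilator_def HB_def
        by (auto simp: res_on blinfun.diff_left)
      show "dd ((\<lambda>h. h - f) ` dual_sphere x \<inter> annihilator Y) \<subseteq> span (dd (HB Y (res Y f)))"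
      proof
        fix z assume "z \<in> dd ((\<lambda>h. h - f) ` dual_sphere x \<inter> annihilator Y)"
        then obtain h1 h2 where h: "h1 \<in> dual_sphere x" "h1 - f \<in> annihilator Y"
          "h2 \<in> dual_sphere x" "h2 - f \<in> annihilator Y" "z = (h1 - f) - (h2 - f)"
          unfolding dd_def by blast
        then have "z = h1 - h2" by simp
        then have "z \<in> dd (HB Y (res Y f))" unfolding dd_def using mem h by blast
        then show "z \<in> span (dd (HB Y (res Y f)))" by (rule span_base)
      qed
    qed
    also have "\<dots> \<le> enat (k - 1)" using kU gd gn unfolding property_kU_def by blast
    also have "\<dots> < enat k" using assms(1) by simp
    finally show ?thesis .
  qed
  have cb: "k_chebyshev (annihilator Y) k"
    if refl: "reflexive_on Y" and C: "\<forall>x\<in>Y. norm x = 1 \<longrightarrow> (\<forall>f\<in>dual_sphere x.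
            set_dim ((\<lambda>h. h - f) ` dual_sphere x \<inter> annihilator Y) < enat k)"
  proof (rule kc_from_norm1)
    fix g assume g: "g \<in> dual_on Y" and g1: "dual_norm_on Y g = 1"
    obtain y where yY: "y \<in> Y" and ny: "norm y = 1" and gy: "g y = 1"
      using norm_attain[OF Y refl g g1] by blast
    obtain f where f: "f \<in> HB Y g" using HB_nonempty[OF Y g] by blast
    have ds: "h \<in> dual_sphere y" if "h \<in> HB Y g" for h
      using that yY gy ny g1 unfolding HB_def dual_sphere_def by auto
    have an: "h - f \<in> annihilator Y" if "h \<in> HB Y g" for h
      using that f unfolding HB_def annihilator_def by (auto simp: blinfun.diff_left)
    have "set_dim (HB Y g) \<le> set_dim ((\<lambda>h. h - f) ` dual_sphere y \<inter> annihilator Y)"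
    proof (rule set_dim_le)
      show "dd (HB Y g) \<subseteq> span (dd ((\<lambda>h. h - f) ` dual_sphere y \<inter> annihilator Y))"
      proof
        fix z assume "z \<in> dd (HB Y g)"
        then obtain h1 h2 where h: "h1 \<in> HB Y g" "h2 \<in> HB Y g" "z = h1 - h2" unfolding dd_def by blast
        then have "z = (h1 - f) - (h2 - f)" by simp
        moreover have "h1 - f \<in> (\<lambda>h. h - f) ` dual_sphere y \<inter> annihilator Y"
          using ds[OF h(1)] an[OF h(1)] by blast
        moreover have "h2 - f \<in> (\<lambda>h. h - f) ` dual_sphere y \<inter> annihilator Y"
          using ds[OF h(2)] an[OF h(2)] by blast
        ultimately have "z \<in> dd ((\<lambda>h. h - f) ` dual_sphere y \<inter> annihilator Y)" unfolding dd_def by blast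
        then show "z \<in> span (dd ((\<lambda>h. h - f) ` dual_sphere y \<inter> annihilator Y))" by (rule span_base)
      qed
    qed
    also have "\<dots> < enat k" using C yY ny ds[OF f] by blast
    finally show "set_dim (HB Y g) \<le> enat (k - 1)" using enat_lt_le[OF assms(1)] by blast
  qed
  show ?thesis using ab bc cb by blast
qed


end
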